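(* Let $B_1,B_2\subset\mathbb{R}^m/\mathbb{Z}^m$ be balls. Let $\mathbf{q}_1,\mathbf{q}_2\in\mathbb{Z}^n\setminus\{\mathbf0\}$ be parallel and $\mathbf{r}_1,\mathbf{r}_2\in\mathbb{Z}^{n'}\setminus\{\mathbf0\}$ be parallel, with $|\mathbf{q}_i|=|\mathbf{r}_i|$ for $i=1,2$, and such that either both pairs point in the same direction or both pairs point in opposite directions (i.e. $\mathbf{q}_1\cdot\mathbf{q}_2$ and $\mathbf{r}_1\cdot\mathbf{r}_2$ have the same sign). Then \[ |A_{n,m}(\mathbf{q}_1,B_1)\cap A_{n,m}(\mathbf{q}_2,B_2)|=|A_{n',m}(\mathbf{r}_1,B_1)\cap A_{n',m}(\mathbf{r}_2,B_2)|. \]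
   Context: For $\mathbf{q}\in\mathbb{Z}^n$, $|\mathbf{q}|=\max_i|q_i|$. Balls are max-norm balls in $\mathbb{R}^m/\mathbb{Z}^m$ and $|\cdot|$ is Lebesgue measure. For $\mathbf{q}\in\mathbb{Z}^n$ and a ball $B$, $A_{n,m}(\mathbf{q},B)=\{\mathbf{x}\in[0,1]^{nm}:\mathbf{q}\mathbf{x}+\mathbf{p}\in B\text{ for some }\mathbf{p}\in\mathbb{Z}^m\}$, where $\mathbf{x}$ is an $n\times m$ matrix and $\mathbf{q}\mathbf{x}$ the row-vector–matrix product. *)

theory Defs
  imports "HOL-Analysis.Analysis"
begin

definition int_maxnorm :: "int^'n \<Rightarrow> int" where
  "int_maxnorm q = Max (range (\<lambda>i. \<bar>q $ i\<bar>))"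

definition int_dot :: "int^'n \<Rightarrow> int^'n \<Rightarrow> int" where
  "int_dot q q' = (\<Sum>i\<in>UNIV. q $ i * q' $ i)"

definition int_parallel :: "int^'n \<Rightarrow> int^'n \<Rightarrow> bool" where
  "int_parallel q q' \<longleftrightarrow> (\<exists>c::real. \<forall>i. real_of_int (q' $ i) = c * real_of_int (q $ i))"

text \<open>Open max-norm ball in R^m with centre c and radius rho; its image in R^m/Z^m is the
  ball of the torus. Membership of a point of the torus is tested on representatives,
  with the integer translate p quantified in the definition of A below.\<close>
definition max_ball :: "real^'m \<Rightarrow> real \<Rightarrow> (real^'m) set" where
  "max_ball c \<rho> = {y. \<forall>j. \<bar>y $ j - c $ j\<bar> < \<rho>}"

definition A_set :: "int^'n \<Rightarrow> (real^'m) set \<Rightarrow> (real^'m^'n) set" where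
  "A_set q B = {x. (\<forall>i j. 0 \<le> x $ i $ j \<and> x $ i $ j \<le> 1) \<and>
      (\<exists>p::int^'m. ((\<chi> i. real_of_int (q $ i)) v* x) + (\<chi> j. real_of_int (p $ j)) \<in> B)}"

end

theory Submission
  imports Defs
begin


lemma nn_translate:
  fixes c :: "'a::euclidean_space"
  assumes f: "f \<in> borel_measurable borel"
  shows "(\<integral>\<^sup>+ x. f (x + c) \<partial>lborel) = (\<integral>\<^sup>+ x. f x \<partial>lborel)"
proof -
  have "(\<integral>\<^sup>+ x. f x \<partial>lborel) = (\<integral>\<^sup>+ x. f x \<partial>(distr lborel borel ((+) c)))"
    by (simp add: lborel_distr_plus)
  also have "\<dots> = (\<integral>\<^sup>+ x. f (c + x) \<partial>lborel)"
    by (rule nn_integral_distr) (auto simp: f)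
  finally show ?thesis by (simp add: add.commute)
qed

definition HO :: "'a::euclidean_space set" where
  "HO = {x. \<forall>b\<in>Basis. 0 \<le> x \<bullet> b \<and> x \<bullet> b < 1}"

definition HS :: "'a::euclidean_space \<Rightarrow> real \<Rightarrow> real \<Rightarrow> 'a set" where
  "HS b s t = {x. (\<forall>b'\<in>Basis-{b}. 0 \<le> x \<bullet> b' \<and> x \<bullet> b' < 1) \<and> s \<le> x \<bullet> b \<and> x \<bullet> b < t}"

lemma HO_borel[measurable]: "HO \<in> sets borel"
  unfolding HO_def by measurable

lemma HS_borel[measurable]: "HS b s t \<in> sets borel"
  unfolding HS_def by measurable

lemma periodic_int:
  fixes h :: "'a::euclidean_space \<Rightarrow> 'b"
  assumes per: "\<And>x b. b \<in> Basis \<Longrightarrow> h (x + b) = h x" and b: "b \<in> Basis"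
  shows "h (x + of_int k *\<^sub>R b) = h x"
proof (induction k arbitrary: x rule: int_induct[where k=0])
  case base then show ?case by simp
next
  case (step1 i) then show ?case
    using per[OF b, of "x + of_int i *\<^sub>R b"] by (simp add: algebra_simps)
next
  case (step2 i) then show ?case
    using per[OF b, of "x + of_int (i - 1) *\<^sub>R b"] by (simp add: algebra_simps)
qed

lemma HO_split: "b \<in> Basis \<Longrightarrow> HO = HS b 0 1"
  unfolding HO_def HS_def by auto

lemma inner_shift: "b \<in> Basis \<Longrightarrow> b' \<in> Basis \<Longrightarrow> (x + t *\<^sub>R b) \<bullet> b' = x \<bullet> b' + (if b' = b then t else 0)"
  by (auto simp: inner_add_left inner_Basis)

lemma ind1:
  assumes b: "b \<in> Basis" and t: "0 \<le> t" "t \<le> 1"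
  shows "indicator HO (y - t *\<^sub>R b) = (indicator (HS b t 1) y + indicator (HS b 1 (1+t)) y :: ennreal)"
proof -
  have e: "(y - t *\<^sub>R b) \<bullet> b' = y \<bullet> b' + (if b' = b then -t else 0)" if "b' \<in> Basis" for b'
    using inner_shift[OF b that, of y "-t"] by simp
  show ?thesis
    unfolding HO_split[OF b] HS_def indicator_def using e b t
    by (auto simp: inner_diff_left inner_Basis)
qed

lemma ind2:
  assumes b: "b \<in> Basis"
  shows "indicator (HS b 1 (1+t)) (x + b) = (indicator (HS b 0 t) x :: ennreal)"
proof -
  have e: "(x + b) \<bullet> b' = x \<bullet> b' + (if b' = b then 1 else 0)" if "b' \<in> Basis" for b'
    using inner_shift[OF b that, of x 1] by simp
  show ?thesis
    unfolding HS_def indicator_def using e b by auto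
qed

lemma ind3:
  assumes b: "b \<in> Basis" and t: "0 \<le> t" "t \<le> 1"
  shows "indicator HO x = (indicator (HS b 0 t) x + indicator (HS b t 1) x :: ennreal)"
  unfolding HO_split[OF b] HS_def indicator_def using t by auto

lemma T1:
  fixes h :: "'a::euclidean_space \<Rightarrow> ennreal"
  assumes hm: "h \<in> borel_measurable borel"
    and per: "\<And>x b. b \<in> Basis \<Longrightarrow> h (x + b) = h x" and b: "b \<in> Basis" and t: "0 \<le> t" "t \<le> 1"
  shows "(\<integral>\<^sup>+ x. h (x + t *\<^sub>R b) * indicator HO x \<partial>lborel) = (\<integral>\<^sup>+ x. h x * indicator HO x \<partial>lborel)"
proof -
  have "(\<integral>\<^sup>+ x. h (x + t *\<^sub>R b) * indicator HO x \<partial>lborel)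
      = (\<integral>\<^sup>+ x. (\<lambda>y. h y * indicator HO (y - t *\<^sub>R b)) (x + t *\<^sub>R b) \<partial>lborel)"
    by simp
  also have "\<dots> = (\<integral>\<^sup>+ y. h y * indicator HO (y - t *\<^sub>R b) \<partial>lborel)"
    by (rule nn_translate) (use hm in measurable)
  also have "\<dots> = (\<integral>\<^sup>+ y. h y * indicator (HS b t 1) y + h y * indicator (HS b 1 (1+t)) y \<partial>lborel)"
    by (simp add: ind1[OF b t] distrib_left)
  also have "\<dots> = (\<integral>\<^sup>+ y. h y * indicator (HS b t 1) y \<partial>lborel) + (\<integral>\<^sup>+ y. h y * indicator (HS b 1 (1+t)) y \<partial>lborel)"
    by (rule nn_integral_add) (use hm in measurable)
  also have "(\<integral>\<^sup>+ y. h y * indicator (HS b 1 (1+t)) y \<partial>lborel) = (\<integral>\<^sup>+ y. (\<lambda>y. h y * indicator (HS b 1 (1+t)) y) (y + b) \<partial>lborel)"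
    by (rule nn_translate[symmetric]) (use hm in measurable)
  also have "\<dots> = (\<integral>\<^sup>+ y. h y * indicator (HS b 0 t) y \<partial>lborel)"
    by (simp add: per[OF b] ind2[OF b])
  also have "(\<integral>\<^sup>+ y. h y * indicator (HS b t 1) y \<partial>lborel) + (\<integral>\<^sup>+ y. h y * indicator (HS b 0 t) y \<partial>lborel)
     = (\<integral>\<^sup>+ y. h y * indicator (HS b t 1) y + h y * indicator (HS b 0 t) y \<partial>lborel)"
    by (rule nn_integral_add[symmetric]) (use hm in measurable)
  also have "\<dots> = (\<integral>\<^sup>+ x. h x * indicator HO x \<partial>lborel)"
    by (simp add: ind3[OF b t] distrib_left add.commute)
  finally show ?thesis .
qed

lemma T2:
  fixes h :: "'a::euclidean_space \<Rightarrow> ennreal"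
  assumes hm: "h \<in> borel_measurable borel"
    and per: "\<And>x b. b \<in> Basis \<Longrightarrow> h (x + b) = h x" and b: "b \<in> Basis"
  shows "(\<integral>\<^sup>+ x. h (x + t *\<^sub>R b) * indicator HO x \<partial>lborel) = (\<integral>\<^sup>+ x. h x * indicator HO x \<partial>lborel)"
proof -
  have "h (x + t *\<^sub>R b) = h (x + frac t *\<^sub>R b)" for x
  proof -
    have "x + t *\<^sub>R b = (x + frac t *\<^sub>R b) + of_int \<lfloor>t\<rfloor> *\<^sub>R b"
      by (simp add: frac_def algebra_simps)
    then show ?thesis using periodic_int[OF per b, of "x + frac t *\<^sub>R b" "\<lfloor>t\<rfloor>"] by (simp add: add.assoc)
  qed
  then have "(\<integral>\<^sup>+ x. h (x + t *\<^sub>R b) * indicator HO x \<partial>lborel) = (\<integral>\<^sup>+ x. h (x + frac t *\<^sub>R b) * indicator HO x \<partial>lborel)"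
    by simp
  also have "\<dots> = (\<integral>\<^sup>+ x. h x * indicator HO x \<partial>lborel)"
    by (rule T1[OF hm per b]) (auto simp: frac_ge_0 less_imp_le frac_lt_1)
  finally show ?thesis .
qed

lemma T3:
  fixes S :: "'a::euclidean_space set" and c :: 'a
  assumes "finite S" "S \<subseteq> Basis"
  shows "\<And>h. h \<in> borel_measurable borel \<Longrightarrow> (\<And>x b. b \<in> Basis \<Longrightarrow> h (x + b) = h x) \<Longrightarrow>
    (\<integral>\<^sup>+ x. h (x + (\<Sum>b\<in>S. (c \<bullet> b) *\<^sub>R b)) * indicator HO x \<partial>lborel) = (\<integral>\<^sup>+ x. h x * indicator HO x \<partial>lborel)"
  using assms
proof (induction S rule: finite_induct)
  case empty then show ?case by simp
next
  case (insert b S)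
  define h' where "h' = (\<lambda>y. h (y + (\<Sum>b\<in>S. (c \<bullet> b) *\<^sub>R b)))"
  have hm': "h' \<in> borel_measurable borel" unfolding h'_def using insert(4) by measurable
  have per': "h' (x + b) = h' x" if "b \<in> Basis" for x b
    unfolding h'_def using insert(5)[OF that, of "x + (\<Sum>b\<in>S. (c \<bullet> b) *\<^sub>R b)"] by (simp add: algebra_simps)
  have "(\<integral>\<^sup>+ x. h (x + (\<Sum>b\<in>insert b S. (c \<bullet> b) *\<^sub>R b)) * indicator HO x \<partial>lborel)
     = (\<integral>\<^sup>+ x. h' (x + (c \<bullet> b) *\<^sub>R b) * indicator HO x \<partial>lborel)"
    using insert(1,2) by (simp add: h'_def algebra_simps)
  also have "\<dots> = (\<integral>\<^sup>+ x. h' x * indicator HO x \<partial>lborel)"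
    by (rule T2[OF hm' per']) (use insert(6) in auto)
  also have "\<dots> = (\<integral>\<^sup>+ x. h x * indicator HO x \<partial>lborel)"
    unfolding h'_def by (rule insert(3)[OF insert(4,5)]) (use insert(6) in auto)
  finally show ?case .
qed

lemma HO_sub: "HO \<subseteq> cbox 0 One" by (auto simp: HO_def mem_box less_imp_le)

lemma HO_diff:
  assumes x: "x \<in> cbox 0 One" "x \<notin> HO"
  shows "\<exists>b\<in>Basis. x \<in> cbox b One"
proof -
  obtain b where b: "b \<in> Basis" "x \<bullet> b = 1"
    using x by (auto simp: HO_def mem_box)
  then show ?thesis
    using x by (auto simp: mem_box inner_Basis intro!: bexI[OF _ b(1)])
qed

lemma HO_ae: "AE x in lborel. indicator (cbox 0 One) x = (indicator (HO::'a::euclidean_space set) x :: ennreal)"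
proof (rule AE_I')
  show "(\<Union>b\<in>Basis. cbox b One) \<in> null_sets (lborel :: 'a measure)"
  proof (rule null_sets.finite_UN)
    fix b :: 'a assume b: "b \<in> Basis"
    have P: "(\<Prod>ba\<in>Basis. 1 - (if b = ba then 1 else 0::real)) = 0"
      by (rule prod_zero) (use b in auto)
    then have "emeasure lborel (cbox b One) = 0"
      using b by (subst emeasure_lborel_cbox_eq) (auto simp: inner_Basis inner_diff_left P)
    then show "cbox b One \<in> null_sets lborel" by auto
  qed auto
  show "{x \<in> space lborel. indicator (cbox 0 One) x \<noteq> (indicator HO x :: ennreal)} \<subseteq> (\<Union>b\<in>(Basis::'a set). cbox b One)"
  proof (rule subsetI)
    fix x :: 'a assume xa: "x \<in> {x \<in> space lborel. indicator (cbox 0 One) x \<noteq> (indicator HO x :: ennreal)}"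
    have x1: "x \<in> cbox 0 One"
      using xa HO_sub by (cases "x \<in> cbox 0 One") (auto simp: indicator_def)
    have x2: "x \<notin> HO"
      using xa x1 by (cases "x \<in> HO") (auto simp: indicator_def)
    show "x \<in> (\<Union>b\<in>(Basis::'a set). cbox b One)"
      using HO_diff[OF x1 x2] by blast
  qed
qed

lemma T_cbox:
  fixes h :: "'a::euclidean_space \<Rightarrow> ennreal"
  assumes hm: "h \<in> borel_measurable borel"
    and per: "\<And>x b. b \<in> Basis \<Longrightarrow> h (x + b) = h x"
  shows "(\<integral>\<^sup>+ x. h (x + c) * indicator (cbox 0 One) x \<partial>lborel) = (\<integral>\<^sup>+ x. h x * indicator (cbox 0 One) x \<partial>lborel)"
proof -
  have "(\<integral>\<^sup>+ x. h (x + c) * indicator (cbox 0 One) x \<partial>lborel) = (\<integral>\<^sup>+ x. h (x + c) * indicator HO x \<partial>lborel)"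
    by (rule nn_integral_cong_AE) (use HO_ae in auto)
  also have "\<dots> = (\<integral>\<^sup>+ x. h (x + (\<Sum>b\<in>Basis. (c \<bullet> b) *\<^sub>R b)) * indicator HO x \<partial>lborel)"
    by (simp add: euclidean_representation)
  also have "\<dots> = (\<integral>\<^sup>+ x. h x * indicator HO x \<partial>lborel)"
    by (rule T3[OF _ _ hm per]) auto
  also have "\<dots> = (\<integral>\<^sup>+ x. h x * indicator (cbox 0 One) x \<partial>lborel)"
    by (rule nn_integral_cong_AE) (use HO_ae in auto)
  finally show ?thesis .
qed



lemma vm_cont: "continuous_on UNIV (\<lambda>x::real^'m^'n. v v* x)"
  unfolding vector_matrix_mult_def by (intro continuous_intros)

lemma vm_meas[measurable]: "(\<lambda>x::real^'m^'n. v v* x) \<in> borel_measurable borel"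
  by (rule borel_measurable_continuous_onI[OF vm_cont])

lemma vm_add: "v v* (x + y) = v v* x + v v* (y :: real^'m^'n)"
  by (simp add: vector_matrix_mult_def vec_eq_iff distrib_left sum.distrib)

lemma vm_axis: "v v* (axis i (a::real^'m)) = (v $ i) *\<^sub>R a"
  by (simp add: vector_matrix_mult_def vec_eq_iff axis_def if_distrib if_distribR cong: if_cong)

lemma cbox_mat: "(x :: real^'m^'n) \<in> cbox 0 One \<longleftrightarrow> (\<forall>i j. 0 \<le> x$i$j \<and> x$i$j \<le> 1)"
proof -
  have o: "(One :: real^'m^'n) \<bullet> axis i (axis j 1) = 1" for i j
  proof -
    have "axis i (axis j 1) \<in> (Basis :: (real^'m^'n) set)" by (auto simp: Basis_vec_def)
    then show ?thesis by (rule inner_sum_Basis)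
  qed
  have xb: "x \<bullet> axis i (axis j 1) = x$i$j" for x :: "real^'m^'n" and i j
    by (simp add: inner_axis)
  have o2: "(One :: real^'m^'n) $ i $ j = 1" for i j
    using o[of i j] unfolding xb .
  have bb: "axis i (axis j 1) \<in> (Basis :: (real^'m^'n) set)" for i j by (auto simp: Basis_vec_def)
  show ?thesis
  proof
    assume x: "x \<in> cbox 0 One"
    show "\<forall>i j. 0 \<le> x$i$j \<and> x$i$j \<le> 1"
    proof (intro allI)
      fix i j
      have "(0::real^'m^'n) \<bullet> axis i (axis j 1) \<le> x \<bullet> axis i (axis j 1) \<and> x \<bullet> axis i (axis j 1) \<le> One \<bullet> axis i (axis j (1::real))"
        using x bb[of i j] unfolding mem_box by blast
      then show "0 \<le> x$i$j \<and> x$i$j \<le> 1" unfolding o unfolding xb by simp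
    qed
  next
    assume x: "\<forall>i j. 0 \<le> x$i$j \<and> x$i$j \<le> 1"
    show "x \<in> cbox 0 One"
      unfolding mem_box
    proof
      fix b :: "real^'m^'n" assume "b \<in> Basis"
      then obtain i j where b: "b = axis i (axis j 1)" by (auto simp: Basis_vec_def)
      show "0 \<bullet> b \<le> x \<bullet> b \<and> x \<bullet> b \<le> One \<bullet> b"
        using x unfolding b o unfolding xb by simp
    qed
  qed
qed

lemma Basis_mat: "b \<in> (Basis :: (real^'m^'n) set) \<Longrightarrow> \<exists>i j. b = axis i (axis j 1)"
  by (auto simp: Basis_vec_def)

lemma Basis_vec1: "b \<in> (Basis :: (real^'m) set) \<Longrightarrow> \<exists>j. b = axis j 1"
  by (auto simp: Basis_vec_def)

lemma vm_cont'[continuous_intros]: "continuous_on S f \<Longrightarrow> continuous_on S (\<lambda>x. v v* (f x :: real^'m^'n))"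
  using continuous_on_compose2[OF vm_cont, of S f] by auto

lemma emeasure_unit_cube: "emeasure lborel (cbox (0::'a::euclidean_space) One) = 1"
  by (subst emeasure_lborel_cbox_eq) (auto intro!: prod.neutral)

lemma sets_lborel_pair: "sets (lborel \<Otimes>\<^sub>M lborel) = sets (borel :: ('a::euclidean_space \<times> 'b::euclidean_space) measure)"
proof -
  have "sets (lborel \<Otimes>\<^sub>M lborel) = sets ((borel::'a measure) \<Otimes>\<^sub>M (borel::'b measure))"
    by (rule sets_pair_measure_cong) auto
  also have "\<dots> = sets (borel::('a \<times> 'b) measure)"
    using borel_prod[where 'a='a and 'b='b] by metis
  finally show ?thesis .
qed

lemma ind_comp: "S \<in> sets borel \<Longrightarrow> continuous_on UNIV g \<Longrightarrow> (\<lambda>x. indicator S (g x) :: ennreal) \<in> borel_measurable borel"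
  by (rule measurable_compose[OF borel_measurable_continuous_onI]) auto

lemma L:
  fixes u :: "int^'n" and E :: "(real^'m) set"
  assumes u: "u \<noteq> 0" and Eb: "E \<in> sets borel"
    and Eper: "\<And>z j. z + axis j 1 \<in> E \<longleftrightarrow> z \<in> E"
  shows "(\<integral>\<^sup>+ x. indicator E ((\<chi> i. real_of_int (u$i)) v* x) * indicator (cbox 0 One) (x::real^'m^'n) \<partial>lborel)
       = (\<integral>\<^sup>+ z. indicator E z * indicator (cbox 0 One) z \<partial>lborel)"
proof -
  define uv where "uv = (\<chi> i. real_of_int (u$i))"
  obtain i0 where i0: "u$i0 \<noteq> 0" using u by (auto simp: vec_eq_iff)
  define \<beta> where "\<beta> a = axis i0 ((1 / uv$i0) *\<^sub>R a)" for a :: "real^'m"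
  have uvb: "uv v* (x + \<beta> a) = uv v* x + a" for x :: "real^'m^'n" and a
    using i0 by (simp add: \<beta>_def vm_add vm_axis uv_def)
  define h where "h x = (indicator E (uv v* x) :: ennreal)" for x :: "real^'m^'n"
  have hm: "h \<in> borel_measurable borel" unfolding h_def using Eb by measurable
  have Em: "(indicator E :: real^'m \<Rightarrow> ennreal) \<in> borel_measurable borel" using Eb by measurable
  have perE: "indicator E (z + b) = (indicator E z :: ennreal)" if bB: "b \<in> Basis" for z b
  proof -
    obtain j where "b = axis j (1::real)" using Basis_vec1[OF bB] by blast
    then show ?thesis using Eper[of z j] by (simp add: indicator_def)
  qed
  have hper: "h (x + b) = h x" if bB: "b \<in> Basis" for x b
  proof -
    obtain i j where b: "b = axis i (axis j (1::real))" using Basis_mat[OF bB] by blast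
    have bj: "axis j 1 \<in> (Basis :: (real^'m) set)" by (auto simp: Basis_vec_def)
    have "uv v* (x + b) = uv v* x + of_int (u$i) *\<^sub>R axis j 1"
      by (simp add: b vm_add vm_axis uv_def)
    then show ?thesis unfolding h_def using periodic_int[OF perE bj] by simp
  qed
  define C where "C = cbox (0::real^'m^'n) One"
  define Cm where "Cm = cbox (0::real^'m) One"
  define I where "I = (\<integral>\<^sup>+ x. h x * indicator C x \<partial>lborel)"
  define \<Phi> where "\<Phi> = (\<integral>\<^sup>+ z. indicator E z * indicator Cm z \<partial>lborel)"
  have "I = (\<integral>\<^sup>+ a. I * indicator Cm a \<partial>lborel)"
    by (subst nn_integral_cmult_indicator) (auto simp: Cm_def emeasure_unit_cube)
  also have "\<dots> = (\<integral>\<^sup>+ a. (\<integral>\<^sup>+ x. indicator Cm a * (h (x + \<beta> a) * indicator C x) \<partial>lborel) \<partial>lborel)"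
  proof (rule nn_integral_cong)
    fix a
    have "(\<integral>\<^sup>+ x. indicator Cm a * (h (x + \<beta> a) * indicator C x) \<partial>lborel)
        = indicator Cm a * (\<integral>\<^sup>+ x. h (x + \<beta> a) * indicator C x \<partial>lborel)"
      by (rule nn_integral_cmult) (use hm in \<open>unfold C_def, measurable\<close>)
    also have "(\<integral>\<^sup>+ x. h (x + \<beta> a) * indicator C x \<partial>lborel) = I"
      unfolding I_def C_def by (rule T_cbox[OF hm hper])
    finally show "I * indicator Cm a = (\<integral>\<^sup>+ x. indicator Cm a * (h (x + \<beta> a) * indicator C x) \<partial>lborel)"
      by (simp add: mult.commute)
  qed
  also have "\<dots> = (\<integral>\<^sup>+ x. (\<integral>\<^sup>+ a. indicator Cm a * (h (x + \<beta> a) * indicator C x) \<partial>lborel) \<partial>lborel)"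
  proof (rule pair_sigma_finite.Fubini')
    show "pair_sigma_finite lborel lborel" by (intro pair_sigma_finite.intro) (rule sigma_finite_lborel)+
    have cont: "continuous_on UNIV (\<lambda>p::(real^'m^'n) \<times> (real^'m). uv v* fst p + snd p)"
      by (intro continuous_intros)
    have "(\<lambda>p::(real^'m^'n) \<times> (real^'m). indicator Cm (snd p) * (indicator E (uv v* fst p + snd p) * indicator C (fst p)) :: ennreal)
        \<in> borel_measurable borel"
      unfolding Cm_def C_def
      by (intro borel_measurable_times_ennreal ind_comp cont Eb) (auto intro!: continuous_intros)
    then show "(\<lambda>(x, a). indicator Cm a * (h (x + \<beta> a) * indicator C x)) \<in> borel_measurable (lborel \<Otimes>\<^sub>M lborel)"
      by (subst measurable_cong_sets[OF sets_lborel_pair refl]) (simp add: h_def uvb case_prod_beta')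
  qed
  also have "\<dots> = (\<integral>\<^sup>+ x. \<Phi> * indicator C x \<partial>lborel)"
  proof (rule nn_integral_cong)
    fix x
    have "(\<integral>\<^sup>+ a. indicator Cm a * (h (x + \<beta> a) * indicator C x) \<partial>lborel)
        = (\<integral>\<^sup>+ a. indicator C x * (indicator E (a + uv v* x) * indicator Cm a) \<partial>lborel)"
      by (rule nn_integral_cong) (simp add: h_def uvb add.commute mult_ac)
    also have "\<dots> = indicator C x * (\<integral>\<^sup>+ a. indicator E (a + uv v* x) * indicator Cm a \<partial>lborel)"
      by (rule nn_integral_cmult) (use Eb in \<open>unfold Cm_def, measurable\<close>)
    also have "(\<integral>\<^sup>+ a. indicator E (a + uv v* x) * indicator Cm a \<partial>lborel) = \<Phi>"
      unfolding \<Phi>_def Cm_def by (rule T_cbox[OF Em perE])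
    finally show "(\<integral>\<^sup>+ a. indicator Cm a * (h (x + \<beta> a) * indicator C x) \<partial>lborel) = \<Phi> * indicator C x"
      by (simp add: mult.commute)
  qed
  also have "\<dots> = \<Phi>"
    by (subst nn_integral_cmult_indicator) (auto simp: C_def emeasure_unit_cube)
  finally show ?thesis unfolding I_def \<Phi>_def h_def C_def Cm_def uv_def .
qed



definition PB :: "(real^'m) set \<Rightarrow> (real^'m) set" where
  "PB B = {y. \<exists>p::int^'m. y + (\<chi> j. real_of_int (p$j)) \<in> B}"

definition EE :: "int \<Rightarrow> int \<Rightarrow> (real^'m) set \<Rightarrow> (real^'m) set \<Rightarrow> (real^'m) set" where
  "EE a b B1 B2 = {z. of_int a *\<^sub>R z \<in> PB B1 \<and> of_int b *\<^sub>R z \<in> PB B2}"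

lemma One_vec_nth: "(One :: real^'m) $ j = 1"
proof -
  have "axis j 1 \<in> (Basis :: (real^'m) set)" by (auto simp: Basis_vec_def)
  then have "(One :: real^'m) \<bullet> axis j 1 = 1" by (rule inner_sum_Basis)
  then show ?thesis by (simp add: inner_axis)
qed

lemma max_ball_box: "max_ball c \<rho> = box (\<chi> j. c$j - \<rho>) (\<chi> j. c$j + \<rho>)"
  by (simp add: max_ball_def mem_box_cart abs_less_iff set_eq_iff algebra_simps) blast

lemma open_max_ball: "open (max_ball c \<rho>)"
  unfolding max_ball_box by (rule open_box)

lemma open_PB: "open (B::(real^'m) set) \<Longrightarrow> open (PB B)"
proof -
  assume B: "open B"
  have "PB B = (\<Union>p\<in>(UNIV::(int^'m) set). (\<lambda>y. y + (\<chi> j. real_of_int (p$j))) -` B)"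
    by (auto simp: PB_def)
  moreover have "open ((\<lambda>y. y + (\<chi> j. real_of_int (p$j))) -` B)" for p :: "int^'m"
    by (rule continuous_open_vimage[OF B]) (intro continuous_intros)
  ultimately show ?thesis by auto
qed

lemma open_EE: "open B1 \<Longrightarrow> open B2 \<Longrightarrow> open (EE a b B1 B2)"
proof -
  assume B: "open B1" "open B2"
  have "EE a b B1 B2 = (\<lambda>z. of_int a *\<^sub>R z) -` PB B1 \<inter> (\<lambda>z. of_int b *\<^sub>R z) -` PB B2"
    by (auto simp: EE_def)
  moreover have "open ((\<lambda>z. of_int a *\<^sub>R z) -` PB B1)"
    by (rule continuous_open_vimage[OF open_PB[OF B(1)]]) (intro continuous_intros)
  moreover have "open ((\<lambda>z. of_int b *\<^sub>R z) -` PB B2)"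
    by (rule continuous_open_vimage[OF open_PB[OF B(2)]]) (intro continuous_intros)
  ultimately show ?thesis by auto
qed

lemma PB_shift: fixes y :: "real^'m" shows "y + (\<chi> j. real_of_int (k$j)) \<in> PB B \<longleftrightarrow> y \<in> PB B"
proof
  assume "y + (\<chi> j. real_of_int (k$j)) \<in> PB B"
  then obtain p :: "int^'m" where "y + (\<chi> j. real_of_int (k$j)) + (\<chi> j. real_of_int (p$j)) \<in> B"
    by (auto simp: PB_def)
  moreover have "y + (\<chi> j. real_of_int ((k + p)$j)) = y + (\<chi> j. real_of_int (k$j)) + (\<chi> j. real_of_int (p$j))"
    by (simp add: vec_eq_iff)
  ultimately have "y + (\<chi> j. real_of_int ((k + p)$j)) \<in> B" by (simp only:)
  then show "y \<in> PB B" unfolding PB_def by blast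
next
  assume "y \<in> PB B"
  then obtain p :: "int^'m" where "y + (\<chi> j. real_of_int (p$j)) \<in> B"
    by (auto simp: PB_def)
  moreover have "(y + (\<chi> j. real_of_int (k$j))) + (\<chi> j. real_of_int ((p - k)$j)) = y + (\<chi> j. real_of_int (p$j))"
    by (simp add: vec_eq_iff)
  ultimately have "(y + (\<chi> j. real_of_int (k$j))) + (\<chi> j. real_of_int ((p - k)$j)) \<in> B" by (simp only:)
  then show "y + (\<chi> j. real_of_int (k$j)) \<in> PB B" unfolding PB_def by blast
qed

lemma EE_per: fixes z :: "real^'m" shows "z + axis j 1 \<in> EE a b B1 B2 \<longleftrightarrow> z \<in> EE a b B1 B2"
proof -
  have e: "of_int c *\<^sub>R (z + axis j 1) = of_int c *\<^sub>R z + (\<chi> i. real_of_int ((axis j c :: int^'m)$i))" for c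
    by (simp add: vec_eq_iff axis_def distrib_left)
  show ?thesis unfolding EE_def mem_Collect_eq e PB_shift ..
qed

lemma vm_scale: "(c *\<^sub>R v) v* (x::real^'m^'n) = c *\<^sub>R (v v* x)"
  by (simp add: vector_matrix_mult_def vec_eq_iff sum_distrib_left mult.assoc)

lemma A_set_eq:
  fixes q u :: "int^'n" and x :: "real^'m^'n"
  assumes q: "\<forall>i. q$i = a * u$i"
  shows "x \<in> A_set q B \<longleftrightarrow> x \<in> cbox 0 One \<and> of_int a *\<^sub>R ((\<chi> i. real_of_int (u$i)) v* x) \<in> PB B"
proof -
  have "(\<chi> i. real_of_int (q$i)) = of_int a *\<^sub>R (\<chi> i. real_of_int (u$i))"
    using q by (simp add: vec_eq_iff)
  then show ?thesis
    unfolding A_set_def PB_def cbox_mat by (simp add: vm_scale)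
qed

lemma M:
  fixes q1 q2 u :: "int^'n" and c1 c2 :: "real^'m"
  assumes u: "u \<noteq> 0" and q1: "\<forall>i. q1$i = a * u$i" and q2: "\<forall>i. q2$i = b * u$i"
  shows "measure lebesgue (A_set q1 (max_ball c1 \<rho>1) \<inter> A_set q2 (max_ball c2 \<rho>2))
     = enn2real (\<integral>\<^sup>+ z. indicator (EE a b (max_ball c1 \<rho>1) (max_ball c2 \<rho>2)) z * indicator (cbox 0 One) z \<partial>lborel)"
proof -
  define uv where "uv = (\<chi> i. real_of_int (u$i))"
  define E where "E = EE a b (max_ball c1 \<rho>1) (max_ball c2 \<rho>2)"
  define S where "S = {x::real^'m^'n. x \<in> cbox 0 One \<and> uv v* x \<in> E}"
  have SE: "A_set q1 (max_ball c1 \<rho>1) \<inter> A_set q2 (max_ball c2 \<rho>2) = S"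
    by (auto simp: A_set_eq[OF q1] A_set_eq[OF q2] EE_def S_def E_def uv_def)
  have Eb: "E \<in> sets borel" unfolding E_def by (intro borel_open open_EE open_max_ball)
  have "(\<lambda>x::real^'m^'n. uv v* x) -` E \<inter> space borel \<in> sets borel"
    by (rule measurable_sets[OF vm_meas Eb])
  then have V: "(\<lambda>x::real^'m^'n. uv v* x) -` E \<in> sets borel" by simp
  have "S = cbox 0 One \<inter> (\<lambda>x::real^'m^'n. uv v* x) -` E" unfolding S_def by auto
  then have Sb: "S \<in> sets borel" using V by auto
  have "measure lebesgue S = measure lborel S" using Sb by simp
  also have "\<dots> = enn2real (emeasure lborel S)" by (simp add: measure_def)
  also have "emeasure lborel S = (\<integral>\<^sup>+ x. indicator S x \<partial>lborel)" using Sb by simp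
  also have "\<dots> = (\<integral>\<^sup>+ x. indicator E (uv v* x) * indicator (cbox 0 One) x \<partial>lborel)"
    by (rule nn_integral_cong) (auto simp: S_def indicator_def)
  also have "\<dots> = (\<integral>\<^sup>+ z. indicator E z * indicator (cbox 0 One) z \<partial>lborel)"
    unfolding uv_def by (rule L[OF u Eb]) (simp add: E_def EE_per)
  finally show ?thesis by (simp add: SE E_def)
qed



lemma decomp:
  fixes q1 q2 :: "int^'n"
  assumes q1z: "q1 \<noteq> 0" and q2z: "q2 \<noteq> 0" and par: "int_parallel q1 q2"
  shows "\<exists>u a b. u \<noteq> 0 \<and> a \<noteq> 0 \<and> b \<noteq> 0 \<and> coprime a b \<and> (\<forall>i. q1$i = a * u$i) \<and> (\<forall>i. q2$i = b * u$i)"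
proof -
  obtain c where c: "\<And>i. real_of_int (q2$i) = c * real_of_int (q1$i)"
    using par unfolding int_parallel_def by blast
  obtain i0 where i0: "q1$i0 \<noteq> 0" using q1z by (auto simp: vec_eq_iff)
  have cross: "q1$i0 * q2$i = q2$i0 * q1$i" for i
  proof -
    have "real_of_int (q1$i0 * q2$i) = real_of_int (q2$i0 * q1$i)"
      using c[of i] c[of i0] by simp
    then show ?thesis by (simp only: of_int_eq_iff)
  qed
  define g where "g = gcd (q1$i0) (q2$i0)"
  have g0: "g \<noteq> 0" using i0 by (simp add: g_def)
  define a where "a = q1$i0 div g"
  define b where "b = q2$i0 div g"
  have ag: "q1$i0 = a * g" unfolding a_def g_def by simp
  have bg: "q2$i0 = b * g" unfolding b_def g_def by simp
  have cop: "coprime a b" unfolding a_def b_def g_def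
    by (rule div_gcd_coprime) (use i0 in auto)
  have a0: "a \<noteq> 0" using ag i0 by auto
  have ab: "a * q2$i = b * q1$i" for i
  proof -
    have "g * (a * q2$i) = g * (b * q1$i)" using cross[of i] unfolding ag bg by (simp add: ac_simps)
    then show ?thesis using g0 by simp
  qed
  have advd: "a dvd q1$i" for i
  proof -
    have "a dvd b * q1$i" using ab[of i] by (metis dvd_triv_left)
    then show ?thesis using cop by (simp add: coprime_dvd_mult_right_iff)
  qed
  define u where "u = (\<chi> i. q1$i div a)"
  have q1u: "\<forall>i. q1$i = a * u$i" using advd by (simp add: u_def)
  have q2u: "\<forall>i. q2$i = b * u$i"
  proof
    fix i
    have "a * q2$i = a * (b * u$i)" using ab[of i] q1u by (simp add: ac_simps)
    then show "q2$i = b * u$i" using a0 by simp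
  qed
  have b0: "b \<noteq> 0" using q2u q2z by (auto simp: vec_eq_iff)
  have u0: "u \<noteq> 0" using q1u q1z by (auto simp: vec_eq_iff)
  show ?thesis using u0 a0 b0 cop q1u q2u by blast
qed

lemma maxnorm_scale:
  fixes q u :: "int^'n"
  assumes q: "\<forall>i. q$i = a * u$i"
  shows "int_maxnorm q = \<bar>a\<bar> * int_maxnorm u"
proof -
  have "range (\<lambda>i. \<bar>q$i\<bar>) = (\<lambda>t. \<bar>a\<bar> * t) ` range (\<lambda>i. \<bar>u$i\<bar>)"
    using q by (auto simp: abs_mult)
  moreover have "mono (\<lambda>t. \<bar>a\<bar> * t)" by (auto intro!: monoI mult_left_mono)
  ultimately show ?thesis unfolding int_maxnorm_def
    by (simp add: mono_Max_commute)
qed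

lemma maxnorm_pos:
  fixes u :: "int^'n"
  assumes "u \<noteq> 0"
  shows "int_maxnorm u > 0"
proof -
  obtain i where "u$i \<noteq> 0" using assms by (auto simp: vec_eq_iff)
  then have "0 < \<bar>u$i\<bar>" by simp
  also have "\<bar>u$i\<bar> \<le> int_maxnorm u" unfolding int_maxnorm_def by (rule Max_ge) auto
  finally show ?thesis .
qed

lemma dot_sgn:
  fixes q1 q2 u :: "int^'n"
  assumes u: "u \<noteq> 0" and q1: "\<forall>i. q1$i = a * u$i" and q2: "\<forall>i. q2$i = b * u$i"
  shows "sgn (int_dot q1 q2) = sgn (a * b)"
proof -
  have "int_dot q1 q2 = a * b * (\<Sum>i\<in>UNIV. u$i * u$i)"
    unfolding int_dot_def using q1 q2 by (simp add: sum_distrib_left ac_simps)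
  moreover have "(\<Sum>i\<in>UNIV. u$i * u$i) > 0"
  proof -
    obtain i where "u$i \<noteq> 0" using u by (auto simp: vec_eq_iff)
    then show ?thesis by (intro sum_pos2[of UNIV i]) (auto simp: zero_less_mult_iff)
  qed
  ultimately show ?thesis by (simp add: sgn_mult)
qed

lemma ab_unique:
  fixes a b a' b' N N' :: int
  assumes nz: "a \<noteq> 0" "b \<noteq> 0" "a' \<noteq> 0" "b' \<noteq> 0" and cop: "coprime a b" "coprime a' b'"
    and N: "N > 0" "N' > 0" and e1: "\<bar>a\<bar> * N = \<bar>a'\<bar> * N'" and e2: "\<bar>b\<bar> * N = \<bar>b'\<bar> * N'"
    and s: "sgn (a * b) = sgn (a' * b')"
  shows "(a' = a \<and> b' = b) \<or> (a' = -a \<and> b' = -b)"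
proof -
  have "\<bar>a\<bar> * \<bar>b'\<bar> * N = \<bar>a'\<bar> * \<bar>b\<bar> * N"
  proof -
    have "\<bar>a\<bar> * \<bar>b'\<bar> * N = \<bar>b'\<bar> * (\<bar>a'\<bar> * N')" using e1 by (simp add: ac_simps)
    also have "\<dots> = \<bar>a'\<bar> * (\<bar>b\<bar> * N)" using e2 by (simp add: ac_simps)
    finally show ?thesis by (simp add: ac_simps)
  qed
  then have x: "\<bar>a\<bar> * \<bar>b'\<bar> = \<bar>a'\<bar> * \<bar>b\<bar>" using N by simp
  have d1: "\<bar>a\<bar> dvd \<bar>a'\<bar>"
  proof -
    have "\<bar>a\<bar> dvd \<bar>b\<bar> * \<bar>a'\<bar>" using x by (metis dvd_triv_left mult.commute)
    moreover have "coprime \<bar>a\<bar> \<bar>b\<bar>" using cop by simp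
    ultimately show ?thesis by (simp add: coprime_dvd_mult_right_iff)
  qed
  have d2: "\<bar>a'\<bar> dvd \<bar>a\<bar>"
  proof -
    have "\<bar>a'\<bar> dvd \<bar>b'\<bar> * \<bar>a\<bar>" using x by (metis dvd_triv_left mult.commute)
    moreover have "coprime \<bar>a'\<bar> \<bar>b'\<bar>" using cop by simp
    ultimately show ?thesis by (simp add: coprime_dvd_mult_right_iff)
  qed
  have aa: "\<bar>a\<bar> = \<bar>a'\<bar>" by (rule zdvd_antisym_nonneg[OF abs_ge_zero abs_ge_zero d1 d2])
  have bb: "\<bar>b\<bar> = \<bar>b'\<bar>" using x aa nz by simp
  have a': "a' = a \<or> a' = -a" using aa by (auto simp: abs_eq_iff)
  have b': "b' = b \<or> b' = -b" using bb by (auto simp: abs_eq_iff)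
  have sn: "sgn (a * b) \<noteq> 0" using nz by (simp add: sgn_0_0)
  have "\<not> (a' = a \<and> b' = -b)"
  proof
    assume "a' = a \<and> b' = -b"
    then have "sgn (a * b) = - sgn (a * b)" using s by (simp add: sgn_mult)
    then show False using sn by simp
  qed
  moreover have "\<not> (a' = -a \<and> b' = b)"
  proof
    assume "a' = -a \<and> b' = b"
    then have "sgn (a * b) = - sgn (a * b)" using s by (simp add: sgn_mult)
    then show False using sn by simp
  qed
  ultimately show ?thesis using a' b' by blast
qed


theorem mainTheorem7:
  fixes q1 q2 :: "int^'n" and r1 r2 :: "int^'k" and c1 c2 :: "real^'m" and \<rho>1 \<rho>2 :: real
  assumes "\<rho>1 > 0" and "\<rho>2 > 0"
    and "q1 \<noteq> 0" and "q2 \<noteq> 0" and "int_parallel q1 q2"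
    and "r1 \<noteq> 0" and "r2 \<noteq> 0" and "int_parallel r1 r2"
    and "int_maxnorm q1 = int_maxnorm r1" and "int_maxnorm q2 = int_maxnorm r2"
    and "sgn (int_dot q1 q2) = sgn (int_dot r1 r2)"
  shows "measure lebesgue (A_set q1 (max_ball c1 \<rho>1) \<inter> A_set q2 (max_ball c2 \<rho>2))
       = measure lebesgue (A_set r1 (max_ball c1 \<rho>1) \<inter> A_set r2 (max_ball c2 \<rho>2))"
proof -
  obtain u a b where U: "u \<noteq> 0" "a \<noteq> 0" "b \<noteq> 0" "coprime a b" "\<forall>i. q1$i = a * u$i" "\<forall>i. q2$i = b * u$i"
    using decomp[OF assms(3,4,5)] by blast
  obtain u' a' b' where U': "u' \<noteq> 0" "a' \<noteq> 0" "b' \<noteq> 0" "coprime a' b'" "\<forall>i. r1$i = a' * u'$i" "\<forall>i. r2$i = b' * u'$i"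
    using decomp[OF assms(6,7,8)] by blast
  have e1: "\<bar>a\<bar> * int_maxnorm u = \<bar>a'\<bar> * int_maxnorm u'"
    using assms(9) maxnorm_scale[OF U(5)] maxnorm_scale[OF U'(5)] by simp
  have e2: "\<bar>b\<bar> * int_maxnorm u = \<bar>b'\<bar> * int_maxnorm u'"
    using assms(10) maxnorm_scale[OF U(6)] maxnorm_scale[OF U'(6)] by simp
  have s: "sgn (a * b) = sgn (a' * b')"
    using assms(11) dot_sgn[OF U(1,5,6)] dot_sgn[OF U'(1,5,6)] by simp
  have cases: "(a' = a \<and> b' = b) \<or> (a' = -a \<and> b' = -b)"
    by (rule ab_unique[OF U(2,3) U'(2,3) U(4) U'(4) maxnorm_pos[OF U(1)] maxnorm_pos[OF U'(1)] e1 e2 s])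
  obtain w :: "int^'k" where w: "w \<noteq> 0" "\<forall>i. r1$i = a * w$i" "\<forall>i. r2$i = b * w$i"
  proof (cases "a' = a \<and> b' = b")
    case True
    then show ?thesis using that[of u'] U' by simp
  next
    case False
    then have "a' = -a" "b' = -b" using cases by auto
    then show ?thesis using that[of "-u'"] U' by simp
  qed
  show ?thesis by (simp only: M[OF U(1,5,6), of c1 \<rho>1 c2 \<rho>2] M[OF w, of c1 \<rho>1 c2 \<rho>2])
qed

end
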